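(* Let $A=(a_{\mathbf i})_{\mathbf i\in[n]^d}$ be a real $d$-tensor, $I\subseteq[d]$, and fix $\mathbf i_I\in[n]^I$. Call a set $C\subseteq[n]^d$ admissible if $\|(A\circ1_C)_{\mathbf i_{I^c}}\|_{\mathcal J}\le\|A_{\mathbf i_{I^c}}\|_{\mathcal J}$ for every real $d$-tensor $A$ and every partition $\mathcal J$ of $I^c$. Then: (1) every generalized row $C=\{\mathbf i: i_{k_1}=j_1,\dots,i_{k_l}=j_l\}$ ($1\le k_1<\dots<k_l\le d$, $j_1,\dots,j_l\in[n]$) is admissible; (2) every generalized diagonal $C=\{\mathbf i: i_k=i_l\ \forall k,l\in K\}$ ($K\subseteq[d]$) is admissible; (3) if $C_1,C_2$ are admissible, so is $C_1\cap C_2$; (4) for every partition $\mathcal K$ of $[d]$ and every partition $\mathcal J$ of $I^c$, $\|(A\circ1_{L(\mathcal K)})_{\mathbf i_{I^c}}\|_{\mathcal J}\le2^{|\mathcal K|(|\mathcal K|-1)/2}\|A_{\mathbf i_{I^c}}\|_{\mathcal J}$; (5) for all $v_1,\dots,v_d\in\mathbb{R}^n$ and every partition $\mathcal J$ of $I^c$, $\|(A\circ\bigotimes_{i=1}^dv_i)_{\mathbf i_{I^c}}\|_{\mathcal J}\le\|A_{\mathbf i_{I^c}}\|_{\mathcal J}\prod_{i=1}^d\|v_i\|_\infty$.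
   Context: $\circ$ denotes the entrywise product, $1_C$ the $0/1$ indicator tensor of $C\subseteq[n]^d$, $(v_1\otimes\cdots\otimes v_d)_{\mathbf i}=\prod_j(v_j)_{i_j}$. For $\mathcal K=\{K_1,\dots,K_a\}$ a partition of $[d]$, $L(\mathcal K)=\{\mathbf i\in[n]^d:i_k=i_l\iff\exists j:k,l\in K_j\}$. $B_{\mathbf i_{I^c}}$ is the tensor indexed by $[n]^{I^c}$ obtained from a $d$-tensor $B$ by fixing the indices in $I$ to $\mathbf i_I$. For a tensor $B$ indexed by $[n]^S$ and a partition $\mathcal J=\{J_1,\dots,J_k\}$ of $S$, $\|B\|_{\mathcal J}:=\sup\{\sum_{\mathbf i\in[n]^S}b_{\mathbf i}\prod_lx^{(l)}_{\mathbf i_{J_l}}:x^{(l)}\in\mathbb{R}^{[n]^{J_l}},\|x^{(l)}\|_2\le1\}$. If $I=[d]$, the only partition of $I^c$ is the empty one and the norm is $|a_{\mathbf i}|$. *)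

theory Defs
  imports "HOL-Analysis.Analysis" "HOL-Library.Disjoint_Sets"
begin

text \<open>Conventions: [d] = {..<d}, [n] = {..<n} (0-based). A d-tensor is a map (nat \<Rightarrow> nat) \<Rightarrow> real,
  of which only the values on [n]^d matter.\<close>

definition idx :: "nat \<Rightarrow> nat set \<Rightarrow> (nat \<Rightarrow> nat) set" where
  "idx n S = PiE S (\<lambda>_. {..<n})"

definition mask :: "((nat \<Rightarrow> nat) \<Rightarrow> real) \<Rightarrow> (nat \<Rightarrow> nat) set \<Rightarrow> ((nat \<Rightarrow> nat) \<Rightarrow> real)" where
  "mask A C = (\<lambda>i. A i * indicator C i)"

definition slice :: "((nat \<Rightarrow> nat) \<Rightarrow> real) \<Rightarrow> nat set \<Rightarrow> (nat \<Rightarrow> nat) \<Rightarrow> ((nat \<Rightarrow> nat) \<Rightarrow> real)" where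
  "slice A I iI = (\<lambda>j. A (\<lambda>k. if k \<in> I then iI k else j k))"

text \<open>The partition norm \<parallel>B\<parallel>_J of a tensor B indexed by [n]^S, J a partition of S.
  For the empty partition (S = {}) it is |b| by the paper's convention.\<close>
definition pnorm :: "nat \<Rightarrow> nat set \<Rightarrow> nat set set \<Rightarrow> ((nat \<Rightarrow> nat) \<Rightarrow> real) \<Rightarrow> real" where
  "pnorm n S J B =
    (if J = {} then \<bar>\<Sum>i\<in>idx n S. B i\<bar>
     else Sup {(\<Sum>i\<in>idx n S. B i * (\<Prod>Jl\<in>J. x Jl (restrict i Jl))) | x.
                \<forall>Jl\<in>J. (\<Sum>j\<in>idx n Jl. (x Jl j)\<^sup>2) \<le> 1})"

definition admissible :: "nat \<Rightarrow> nat \<Rightarrow> nat set \<Rightarrow> (nat \<Rightarrow> nat) \<Rightarrow> (nat \<Rightarrow> nat) set \<Rightarrow> bool" where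
  "admissible n d I iI C \<longleftrightarrow> C \<subseteq> idx n {..<d} \<and>
     (\<forall>(A :: (nat \<Rightarrow> nat) \<Rightarrow> real) J. partition_on ({..<d} - I) J \<longrightarrow>
        pnorm n ({..<d} - I) J (slice (mask A C) I iI) \<le> pnorm n ({..<d} - I) J (slice A I iI))"

definition Lset :: "nat \<Rightarrow> nat \<Rightarrow> nat set set \<Rightarrow> (nat \<Rightarrow> nat) set" where
  "Lset n d K = {i \<in> idx n {..<d}. \<forall>k<d. \<forall>l<d. (i k = i l \<longleftrightarrow> (\<exists>B\<in>K. k \<in> B \<and> l \<in> B))}"

definition tprod :: "nat \<Rightarrow> (nat \<Rightarrow> nat \<Rightarrow> real) \<Rightarrow> ((nat \<Rightarrow> nat) \<Rightarrow> real)" where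
  "tprod d v = (\<lambda>i. \<Prod>k<d. v k (i k))"

definition supnorm :: "nat \<Rightarrow> (nat \<Rightarrow> real) \<Rightarrow> real" where
  "supnorm n w = Max {\<bar>w j\<bar> | j. j < n}"

end

theory Submission
  imports Defs
begin


lemma idx_restrict: "j \<in> idx n S \<Longrightarrow> l \<subseteq> S \<Longrightarrow> restrict j l \<in> idx n l"
  by (auto simp: idx_def PiE_iff)

lemma finite_idx: "finite S \<Longrightarrow> finite (idx n S)"
  by (simp add: idx_def finite_PiE)

definition elems :: "nat \<Rightarrow> nat set \<Rightarrow> nat set set \<Rightarrow> ((nat \<Rightarrow> nat) \<Rightarrow> real) \<Rightarrow> real set" where
  "elems n S J B = {(\<Sum>i\<in>idx n S. B i * (\<Prod>Jl\<in>J. x Jl (restrict i Jl))) | x.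
                \<forall>Jl\<in>J. (\<Sum>j\<in>idx n Jl. (x Jl j)\<^sup>2) \<le> 1}"

lemma pnorm_Sup: "J \<noteq> {} \<Longrightarrow> pnorm n S J B = Sup (elems n S J B)"
  by (simp add: pnorm_def elems_def)

lemma pnorm_empty: "pnorm n S {} B = \<bar>\<Sum>i\<in>idx n S. B i\<bar>"
  by (simp add: pnorm_def)

lemma sq_le1: "finite A \<Longrightarrow> (\<Sum>j\<in>A. (f j)\<^sup>2) \<le> (1::real) \<Longrightarrow> u \<in> A \<Longrightarrow> \<bar>f u\<bar> \<le> 1"
proof -
  assume a: "finite A" "(\<Sum>j\<in>A. (f j)\<^sup>2) \<le> (1::real)" "u \<in> A"
  have "(f u)\<^sup>2 \<le> (\<Sum>j\<in>A. (f j)\<^sup>2)" using a by (intro member_le_sum) auto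
  then have "(f u)\<^sup>2 \<le> 1" using a by linarith
  then show ?thesis by (simp add: abs_square_le_1)
qed

lemma elems_bdd:
  assumes S: "finite S" and P: "partition_on S J"
  shows "bdd_above (elems n S J B)"
proof (rule bdd_aboveI)
  fix v assume "v \<in> elems n S J B"
  then obtain x where v: "v = (\<Sum>i\<in>idx n S. B i * (\<Prod>Jl\<in>J. x Jl (restrict i Jl)))"
    and x: "\<forall>Jl\<in>J. (\<Sum>j\<in>idx n Jl. (x Jl j)\<^sup>2) \<le> 1" unfolding elems_def by blast
  have "v \<le> (\<Sum>i\<in>idx n S. \<bar>B i\<bar>)"
    unfolding v
  proof (rule sum_mono)
    fix i assume i: "i \<in> idx n S"
    have "\<bar>\<Prod>Jl\<in>J. x Jl (restrict i Jl)\<bar> \<le> 1"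
      unfolding abs_prod
    proof (rule prod_le_1)
      fix Jl assume "Jl \<in> J"
      then have "Jl \<subseteq> S" using P by (auto simp: partition_on_def)
      then have "restrict i Jl \<in> idx n Jl" using i idx_restrict by blast
      moreover have "finite Jl" using \<open>Jl \<subseteq> S\<close> S finite_subset by blast
      ultimately show "0 \<le> \<bar>x Jl (restrict i Jl)\<bar> \<and> \<bar>x Jl (restrict i Jl)\<bar> \<le> 1"
        using x \<open>Jl \<in> J\<close> sq_le1[OF finite_idx] by auto
    qed
    then have "\<bar>B i * (\<Prod>Jl\<in>J. x Jl (restrict i Jl))\<bar> \<le> \<bar>B i\<bar>"
      by (simp add: abs_mult mult_left_le)
    then show "B i * (\<Prod>Jl\<in>J. x Jl (restrict i Jl)) \<le> \<bar>B i\<bar>" by linarith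
  qed
  then show "v \<le> (\<Sum>i\<in>idx n S. \<bar>B i\<bar>)" .
qed

lemma elems_ne: "(\<Sum>i\<in>idx n S. B i * (\<Prod>Jl\<in>J. 0)) \<in> elems n S J B"
  unfolding elems_def by (rule CollectI, rule exI[of _ "\<lambda>_ _. 0"]) auto

lemma pnorm_nonneg:
  assumes S: "finite S" and P: "partition_on S J"
  shows "0 \<le> pnorm n S J B"
proof (cases "J = {}")
  case True then show ?thesis by (simp add: pnorm_empty)
next
  case False
  have fin: "finite J" using S P finite_elements by blast
  have "(\<Sum>i\<in>idx n S. B i * (\<Prod>Jl\<in>J. 0)) = 0" using False fin by (simp add: zero_power card_gt_0_iff)
  moreover have "(\<Sum>i\<in>idx n S. B i * (\<Prod>Jl\<in>J. 0)) \<in> elems n S J B" by (rule elems_ne)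
  ultimately have "0 \<in> elems n S J B" by simp
  then show ?thesis using False pnorm_Sup cSup_upper elems_bdd[OF S P] by metis
qed

lemma part_sub: "partition_on S J \<Longrightarrow> l \<in> J \<Longrightarrow> l \<subseteq> S"
  by (auto simp: partition_on_def)

lemma key:
  assumes S: "finite S" and P: "partition_on S J" and Jne: "J \<noteq> {}"
  shows "(\<Sum>i\<in>idx n S. B i * (\<Prod>l\<in>J. z l (restrict i l)))
          \<le> pnorm n S J B * (\<Prod>l\<in>J. sqrt (\<Sum>u\<in>idx n l. (z l u)\<^sup>2))"
proof -
  define N where "N l = sqrt (\<Sum>u\<in>idx n l. (z l u)\<^sup>2)" for l
  have finJ: "finite J" using S P finite_elements by blast
  have fl: "finite (idx n l)" if "l \<in> J" for l
    using that part_sub[OF P] S finite_subset finite_idx by metis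
  have Nnn: "0 \<le> N l" for l unfolding N_def by (simp add: sum_nonneg)
  have pn: "0 \<le> pnorm n S J B" by (rule pnorm_nonneg[OF S P])
  show ?thesis
  proof (cases "\<exists>l\<in>J. N l = 0")
    case True
    then obtain l where l: "l \<in> J" "N l = 0" by blast
    then have "(\<Sum>u\<in>idx n l. (z l u)\<^sup>2) = 0" unfolding N_def by simp
    then have z0: "\<forall>u\<in>idx n l. z l u = 0"
      using sum_nonneg_eq_0_iff[OF fl[OF l(1)], of "\<lambda>u. (z l u)\<^sup>2"] by simp
    have "(\<Sum>i\<in>idx n S. B i * (\<Prod>l\<in>J. z l (restrict i l))) = 0"
    proof (rule sum.neutral, rule ballI)
      fix i assume "i \<in> idx n S"
      then have "restrict i l \<in> idx n l" using idx_restrict part_sub[OF P l(1)] by blast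
      then have "(\<Prod>l\<in>J. z l (restrict i l)) = 0" using z0 l(1) finJ
        by (intro prod_zero) auto
      then show "B i * (\<Prod>l\<in>J. z l (restrict i l)) = 0" by simp
    qed
    moreover have "(\<Prod>l\<in>J. N l) = 0" using l finJ by (intro prod_zero) auto
    ultimately show ?thesis by (simp add: N_def)
  next
    case False
    then have Npos: "\<forall>l\<in>J. 0 < N l" using Nnn less_eq_real_def by auto
    define y where "y l u = z l u / N l" for l u
    have "\<forall>l\<in>J. (\<Sum>u\<in>idx n l. (y l u)\<^sup>2) \<le> 1"
    proof
      fix l assume l: "l \<in> J"
      have "0 \<le> (\<Sum>u\<in>idx n l. (z l u)\<^sup>2)" by (intro sum_nonneg) simp
      then have "(N l)\<^sup>2 = (\<Sum>u\<in>idx n l. (z l u)\<^sup>2)" unfolding N_def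
        by simp
      moreover have "(\<Sum>u\<in>idx n l. (y l u)\<^sup>2) = (\<Sum>u\<in>idx n l. (z l u)\<^sup>2) / (N l)\<^sup>2"
        unfolding y_def by (simp add: power_divide sum_divide_distrib)
      ultimately show "(\<Sum>u\<in>idx n l. (y l u)\<^sup>2) \<le> 1" using Npos l by simp
    qed
    then have "(\<Sum>i\<in>idx n S. B i * (\<Prod>l\<in>J. y l (restrict i l))) \<in> elems n S J B"
      unfolding elems_def by blast
    then have le: "(\<Sum>i\<in>idx n S. B i * (\<Prod>l\<in>J. y l (restrict i l))) \<le> pnorm n S J B"
      using pnorm_Sup[OF Jne] cSup_upper elems_bdd[OF S P] by metis
    have "(\<Sum>i\<in>idx n S. B i * (\<Prod>l\<in>J. z l (restrict i l)))
        = (\<Sum>i\<in>idx n S. (\<Prod>l\<in>J. N l) * (B i * (\<Prod>l\<in>J. y l (restrict i l))))"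
    proof (rule sum.cong[OF refl])
      fix i
      have "(\<Prod>l\<in>J. z l (restrict i l)) = (\<Prod>l\<in>J. N l * y l (restrict i l))"
        using Npos unfolding y_def by (intro prod.cong) auto
      also have "\<dots> = (\<Prod>l\<in>J. N l) * (\<Prod>l\<in>J. y l (restrict i l))"
        by (rule prod.distrib)
      finally show "B i * (\<Prod>l\<in>J. z l (restrict i l)) = (\<Prod>l\<in>J. N l) * (B i * (\<Prod>l\<in>J. y l (restrict i l)))"
        by simp
    qed
    also have "\<dots> = (\<Prod>l\<in>J. N l) * (\<Sum>i\<in>idx n S. B i * (\<Prod>l\<in>J. y l (restrict i l)))"
      by (simp add: sum_distrib_left)
    also have "\<dots> \<le> (\<Prod>l\<in>J. N l) * pnorm n S J B"
      using le by (intro mult_left_mono) (auto intro: prod_nonneg Nnn)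
    finally show ?thesis unfolding N_def by (simp add: mult.commute)
  qed
qed

lemma key_abs:
  assumes S: "finite S" and P: "partition_on S J" and Jne: "J \<noteq> {}"
  shows "\<bar>\<Sum>i\<in>idx n S. B i * (\<Prod>l\<in>J. z l (restrict i l))\<bar>
          \<le> pnorm n S J B * (\<Prod>l\<in>J. sqrt (\<Sum>u\<in>idx n l. (z l u)\<^sup>2))"
proof -
  have finJ: "finite J" using S P finite_elements by blast
  obtain l0 where l0: "l0 \<in> J" using Jne by blast
  define z' where "z' l u = (if l = l0 then -1 else 1) * z l u" for l u
  have "(\<Sum>i\<in>idx n S. B i * (\<Prod>l\<in>J. z' l (restrict i l)))
          \<le> pnorm n S J B * (\<Prod>l\<in>J. sqrt (\<Sum>u\<in>idx n l. (z' l u)\<^sup>2))"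
    by (rule key[OF S P Jne])
  moreover have "(\<Prod>l\<in>J. sqrt (\<Sum>u\<in>idx n l. (z' l u)\<^sup>2)) = (\<Prod>l\<in>J. sqrt (\<Sum>u\<in>idx n l. (z l u)\<^sup>2))"
    unfolding z'_def by (intro prod.cong refl) (simp add: power_mult_distrib)
  moreover have "(\<Prod>l\<in>J. z' l (restrict i l)) = - (\<Prod>l\<in>J. z l (restrict i l))" for i
  proof -
    have "(\<Prod>l\<in>J. z' l (restrict i l)) = (\<Prod>l\<in>J. (if l = l0 then -1 else 1)) * (\<Prod>l\<in>J. z l (restrict i l))"
      unfolding z'_def by (rule prod.distrib)
    also have "(\<Prod>l\<in>J. (if l = l0 then -1 else 1::real)) = -1"
      using finJ l0 by (simp add: prod.delta)
    finally show ?thesis by linarith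
  qed
  moreover have "(\<Sum>i\<in>idx n S. B i * (\<Prod>l\<in>J. z l (restrict i l)))
          \<le> pnorm n S J B * (\<Prod>l\<in>J. sqrt (\<Sum>u\<in>idx n l. (z l u)\<^sup>2))"
    by (rule key[OF S P Jne])
  ultimately show ?thesis by (simp add: sum_negf)
qed

lemma pnorm_cong:
  assumes "\<And>j. j \<in> idx n S \<Longrightarrow> B1 j = B2 j"
  shows "pnorm n S J B1 = pnorm n S J B2"
proof -
  have "(\<Sum>i\<in>idx n S. B1 i * f i) = (\<Sum>i\<in>idx n S. B2 i * f i)" for f
    using assms by (intro sum.cong) auto
  moreover have "(\<Sum>i\<in>idx n S. B1 i) = (\<Sum>i\<in>idx n S. B2 i)"
    using assms by (intro sum.cong) auto
  ultimately show ?thesis unfolding pnorm_def by simp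
qed

lemma elem_le:
  assumes S: "finite S" and P: "partition_on S J" and Jne: "J \<noteq> {}"
    and x: "\<forall>l\<in>J. (\<Sum>u\<in>idx n l. (x l u)\<^sup>2) \<le> 1"
  shows "\<bar>\<Sum>i\<in>idx n S. B i * (\<Prod>l\<in>J. x l (restrict i l))\<bar> \<le> pnorm n S J B"
proof -
  have "(\<Prod>l\<in>J. sqrt (\<Sum>u\<in>idx n l. (x l u)\<^sup>2)) \<le> 1"
    using x by (intro prod_le_1) (auto simp: sum_nonneg)
  moreover have "0 \<le> pnorm n S J B" by (rule pnorm_nonneg[OF S P])
  ultimately have "pnorm n S J B * (\<Prod>l\<in>J. sqrt (\<Sum>u\<in>idx n l. (x l u)\<^sup>2)) \<le> pnorm n S J B"
    by (simp add: mult_left_le)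
  then show ?thesis using key_abs[OF S P Jne, where n=n and B=B and z=x] by linarith
qed

lemma pnorm_triangle:
  assumes S: "finite S" and P: "partition_on S J"
  shows "pnorm n S J (\<lambda>j. B1 j - B2 j) \<le> pnorm n S J B1 + pnorm n S J B2"
proof (cases "J = {}")
  case True
  then show ?thesis by (simp add: pnorm_empty sum_subtractf abs_triangle_ineq4)
next
  case False
  show ?thesis unfolding pnorm_Sup[OF False]
  proof (rule cSup_least)
    show "elems n S J (\<lambda>j. B1 j - B2 j) \<noteq> {}" using elems_ne by blast
  next
    fix v assume "v \<in> elems n S J (\<lambda>j. B1 j - B2 j)"
    then obtain x where v: "v = (\<Sum>i\<in>idx n S. (B1 i - B2 i) * (\<Prod>Jl\<in>J. x Jl (restrict i Jl)))"
      and x: "\<forall>Jl\<in>J. (\<Sum>j\<in>idx n Jl. (x Jl j)\<^sup>2) \<le> 1" unfolding elems_def by blast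
    have "v = (\<Sum>i\<in>idx n S. B1 i * (\<Prod>Jl\<in>J. x Jl (restrict i Jl)))
             - (\<Sum>i\<in>idx n S. B2 i * (\<Prod>Jl\<in>J. x Jl (restrict i Jl)))"
      unfolding v by (simp add: sum_subtractf left_diff_distrib)
    then show "v \<le> Sup (elems n S J B1) + Sup (elems n S J B2)"
      using elem_le[OF S P False x, of B1] elem_le[OF S P False x, of B2] pnorm_Sup[OF False]
      by (smt (verit))
  qed
qed

lemma weight:
  assumes S: "finite S" and P: "partition_on S J"
    and w: "\<forall>l\<in>J. \<forall>u\<in>idx n l. \<bar>w l u\<bar> \<le> M l" and Mnn: "\<forall>l\<in>J. 0 \<le> M l"
  shows "pnorm n S J (\<lambda>j. B j * (c * (\<Prod>l\<in>J. w l (restrict j l))))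
     \<le> \<bar>c\<bar> * (\<Prod>l\<in>J. M l) * pnorm n S J B"
proof (cases "J = {}")
  case True
  then show ?thesis by (simp add: pnorm_empty sum_distrib_right[symmetric] abs_mult)
next
  case False
  have finJ: "finite J" using S P finite_elements by blast
  obtain l0 where l0: "l0 \<in> J" using False by blast
  have pn: "0 \<le> pnorm n S J B" by (rule pnorm_nonneg[OF S P])
  show ?thesis unfolding pnorm_Sup[OF False]
  proof (rule cSup_least)
    show "elems n S J (\<lambda>j. B j * (c * (\<Prod>l\<in>J. w l (restrict j l)))) \<noteq> {}" using elems_ne by blast
  next
    fix v assume "v \<in> elems n S J (\<lambda>j. B j * (c * (\<Prod>l\<in>J. w l (restrict j l))))"
    then obtain x where v: "v = (\<Sum>i\<in>idx n S. (B i * (c * (\<Prod>l\<in>J. w l (restrict i l)))) * (\<Prod>Jl\<in>J. x Jl (restrict i Jl)))"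
      and x: "\<forall>Jl\<in>J. (\<Sum>j\<in>idx n Jl. (x Jl j)\<^sup>2) \<le> 1" unfolding elems_def by blast
    define a where "a l = (if l = l0 then c else 1)" for l
    define z where "z l u = a l * w l u * x l u" for l u
    have pa: "(\<Prod>l\<in>J. a l) = c" unfolding a_def using finJ l0 by (simp add: prod.delta)
    have "v = (\<Sum>i\<in>idx n S. B i * (\<Prod>l\<in>J. z l (restrict i l)))"
      unfolding v z_def prod.distrib pa by (simp add: mult_ac)
    also have "\<dots> \<le> pnorm n S J B * (\<Prod>l\<in>J. sqrt (\<Sum>u\<in>idx n l. (z l u)\<^sup>2))"
      by (rule key[OF S P False])
    also have "\<dots> \<le> pnorm n S J B * (\<bar>c\<bar> * (\<Prod>l\<in>J. M l))"
    proof (rule mult_left_mono[OF _ pn])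
      have "(\<Prod>l\<in>J. sqrt (\<Sum>u\<in>idx n l. (z l u)\<^sup>2)) \<le> (\<Prod>l\<in>J. \<bar>a l\<bar> * M l)"
      proof (rule prod_mono)
        fix l assume l: "l \<in> J"
        have g0: "0 \<le> sqrt (\<Sum>u\<in>idx n l. (z l u)\<^sup>2)" by (simp add: sum_nonneg)
        have fl: "finite (idx n l)"
          using l part_sub[OF P] S finite_subset finite_idx by metis
        have "(\<Sum>u\<in>idx n l. (z l u)\<^sup>2) \<le> (\<Sum>u\<in>idx n l. (a l)\<^sup>2 * (M l)\<^sup>2 * (x l u)\<^sup>2)"
        proof (rule sum_mono)
          fix u assume u: "u \<in> idx n l"
          have "(w l u)\<^sup>2 \<le> (M l)\<^sup>2" using w l u by (simp add: abs_le_square_iff[symmetric]) (smt (verit) Mnn l)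
          then have "(a l)\<^sup>2 * (w l u)\<^sup>2 * (x l u)\<^sup>2 \<le> (a l)\<^sup>2 * (M l)\<^sup>2 * (x l u)\<^sup>2"
            by (intro mult_right_mono mult_left_mono) auto
          then show "(z l u)\<^sup>2 \<le> (a l)\<^sup>2 * (M l)\<^sup>2 * (x l u)\<^sup>2"
            unfolding z_def by (simp add: power_mult_distrib)
        qed
        also have "\<dots> = (a l)\<^sup>2 * (M l)\<^sup>2 * (\<Sum>u\<in>idx n l. (x l u)\<^sup>2)"
          by (simp add: sum_distrib_left)
        also have "\<dots> \<le> (a l)\<^sup>2 * (M l)\<^sup>2 * 1"
          using x l by (intro mult_left_mono) auto
        finally have "(\<Sum>u\<in>idx n l. (z l u)\<^sup>2) \<le> (\<bar>a l\<bar> * M l)\<^sup>2"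
          by (simp add: power_mult_distrib)
        then have "sqrt (\<Sum>u\<in>idx n l. (z l u)\<^sup>2) \<le> sqrt ((\<bar>a l\<bar> * M l)\<^sup>2)"
          by (rule real_sqrt_le_mono)
        then show "0 \<le> sqrt (\<Sum>u\<in>idx n l. (z l u)\<^sup>2) \<and> sqrt (\<Sum>u\<in>idx n l. (z l u)\<^sup>2) \<le> \<bar>a l\<bar> * M l"
          using Mnn l g0 by simp
      qed
      also have "\<dots> = \<bar>c\<bar> * (\<Prod>l\<in>J. M l)"
        unfolding prod.distrib abs_prod[symmetric] pa ..
      finally show "(\<Prod>l\<in>J. sqrt (\<Sum>u\<in>idx n l. (z l u)\<^sup>2)) \<le> \<bar>c\<bar> * (\<Prod>l\<in>J. M l)" .
    qed
    finally show "v \<le> \<bar>c\<bar> * (\<Prod>l\<in>J. M l) * Sup (elems n S J B)"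
      using pnorm_Sup[OF False] by (simp add: mult_ac)
  qed
qed



lemma prod_of_bool: "finite J \<Longrightarrow> (\<Prod>l\<in>J. (of_bool (P l) :: real)) = of_bool (\<forall>l\<in>J. P l)"
  by (induction J rule: finite_induct) auto

lemma factor_le:
  assumes S: "finite S" and P: "partition_on S J"
    and g: "\<forall>j\<in>idx n S. g j = c * (\<Prod>l\<in>J. w l (restrict j l))"
    and c: "\<bar>c\<bar> \<le> 1" and w: "\<forall>l\<in>J. \<forall>u\<in>idx n l. \<bar>w l u\<bar> \<le> 1"
  shows "pnorm n S J (\<lambda>j. B j * g j) \<le> pnorm n S J B"
proof -
  have "pnorm n S J (\<lambda>j. B j * g j) = pnorm n S J (\<lambda>j. B j * (c * (\<Prod>l\<in>J. w l (restrict j l))))"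
    using g by (intro pnorm_cong) auto
  also have "\<dots> \<le> \<bar>c\<bar> * (\<Prod>l\<in>J. 1) * pnorm n S J B"
    by (rule weight[OF S P]) (use w in auto)
  also have "\<dots> \<le> pnorm n S J B"
    using c pnorm_nonneg[OF S P] by (simp add: mult_left_le_one_le)
  finally show ?thesis .
qed

lemma diag_cross:
  assumes S: "finite S" and P: "partition_on S J" and KS: "K \<subseteq> S"
    and l12: "l1 \<in> J" "l2 \<in> J" "l1 \<noteq> l2" "K \<inter> l1 \<noteq> {}" "K \<inter> l2 \<noteq> {}"
  shows "pnorm n S J (\<lambda>j. B j * of_bool (\<forall>k\<in>K. \<forall>k'\<in>K. j k = j k')) \<le> pnorm n S J B"
proof -
  have Jne: "J \<noteq> {}" using l12 by auto
  have finJ: "finite J" using S P finite_elements by blast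
  have pn: "0 \<le> pnorm n S J B" by (rule pnorm_nonneg[OF S P])
  have fl: "finite (idx n l)" if "l \<in> J" for l
    using that part_sub[OF P] S finite_subset finite_idx by metis
  have UJ: "\<Union>J = S" using P by (auto simp: partition_on_def)
  define e where "e l (t::nat) (u::nat\<Rightarrow>nat) = (of_bool (\<forall>k\<in>K\<inter>l. u k = t) :: real)" for l t u
  have e01: "e l t u * e l t u = e l t u" for l t u unfolding e_def by (cases "\<forall>k\<in>K\<inter>l. u k = t") auto
  have e0: "0 \<le> e l t u" "e l t u \<le> 1" for l t u unfolding e_def by auto
  show ?thesis unfolding pnorm_Sup[OF Jne]
  proof (rule cSup_least)
    show "elems n S J (\<lambda>j. B j * of_bool (\<forall>k\<in>K. \<forall>k'\<in>K. j k = j k')) \<noteq> {}"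
      using elems_ne by blast
  next
    fix v assume "v \<in> elems n S J (\<lambda>j. B j * of_bool (\<forall>k\<in>K. \<forall>k'\<in>K. j k = j k'))"
    then obtain x where v: "v = (\<Sum>i\<in>idx n S. (B i * of_bool (\<forall>k\<in>K. \<forall>k'\<in>K. i k = i k')) * (\<Prod>Jl\<in>J. x Jl (restrict i Jl)))"
      and x: "\<forall>Jl\<in>J. (\<Sum>j\<in>idx n Jl. (x Jl j)\<^sup>2) \<le> 1" unfolding elems_def by blast
    define z where "z t l u = x l u * e l t u" for t l u
    define a where "a t l = sqrt (\<Sum>u\<in>idx n l. (z t l u)\<^sup>2)" for t l
    obtain k0 where k0: "k0 \<in> K" "k0 \<in> l1" using l12 by blast
    have ge: "of_bool (\<forall>k\<in>K. \<forall>k'\<in>K. j k = j k') = (\<Sum>t<n. \<Prod>l\<in>J. e l t (restrict j l))"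
      if j: "j \<in> idx n S" for j
    proof -
      have pe: "(\<Prod>l\<in>J. e l t (restrict j l)) = of_bool (\<forall>k\<in>K. j k = t)" for t
      proof -
        have "(\<Prod>l\<in>J. e l t (restrict j l)) = of_bool (\<forall>l\<in>J. \<forall>k\<in>K\<inter>l. restrict j l k = t)"
          unfolding e_def by (rule prod_of_bool[OF finJ])
        also have "(\<forall>l\<in>J. \<forall>k\<in>K\<inter>l. restrict j l k = t) \<longleftrightarrow> (\<forall>k\<in>K. j k = t)"
          using KS UJ by auto
        finally show ?thesis .
      qed
      have jk0: "j k0 < n" using j k0 KS by (auto simp: idx_def PiE_iff)
      have "(\<Sum>t<n. \<Prod>l\<in>J. e l t (restrict j l))
          = (\<Sum>t<n. if t = j k0 then of_bool (\<forall>k\<in>K. j k = j k0) else 0)"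
        unfolding pe using k0 by (intro sum.cong) (auto intro!: bexI[of _ k0])
      also have "\<dots> = of_bool (\<forall>k\<in>K. j k = j k0)" using jk0 by (simp add: sum.delta)
      also have "(\<forall>k\<in>K. j k = j k0) \<longleftrightarrow> (\<forall>k\<in>K. \<forall>k'\<in>K. j k = j k')" using k0 by metis
      finally show ?thesis by (rule sym)
    qed
    have "v = (\<Sum>i\<in>idx n S. \<Sum>t<n. B i * (\<Prod>l\<in>J. z t l (restrict i l)))"
      unfolding v
    proof (rule sum.cong[OF refl])
      fix i assume i: "i \<in> idx n S"
      have "B i * of_bool (\<forall>k\<in>K. \<forall>k'\<in>K. i k = i k') * (\<Prod>Jl\<in>J. x Jl (restrict i Jl))
          = (\<Sum>t<n. B i * ((\<Prod>l\<in>J. e l t (restrict i l)) * (\<Prod>Jl\<in>J. x Jl (restrict i Jl))))"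
        unfolding ge[OF i] by (simp add: sum_distrib_left sum_distrib_right mult_ac)
      also have "\<dots> = (\<Sum>t<n. B i * (\<Prod>l\<in>J. z t l (restrict i l)))"
        unfolding z_def by (simp add: prod.distrib mult_ac)
      finally show "B i * of_bool (\<forall>k\<in>K. \<forall>k'\<in>K. i k = i k') * (\<Prod>Jl\<in>J. x Jl (restrict i Jl))
          = (\<Sum>t<n. B i * (\<Prod>l\<in>J. z t l (restrict i l)))" .
    qed
    also have "\<dots> = (\<Sum>t<n. \<Sum>i\<in>idx n S. B i * (\<Prod>l\<in>J. z t l (restrict i l)))"
      by (rule sum.swap)
    also have "\<dots> \<le> (\<Sum>t<n. pnorm n S J B * (\<Prod>l\<in>J. a t l))"
      unfolding a_def by (intro sum_mono key[OF S P Jne])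
    also have "\<dots> = pnorm n S J B * (\<Sum>t<n. \<Prod>l\<in>J. a t l)"
      by (simp add: sum_distrib_left)
    also have "\<dots> \<le> pnorm n S J B * 1"
    proof (rule mult_left_mono[OF _ pn])
      have a0: "0 \<le> a t l" for t l unfolding a_def by (simp add: sum_nonneg)
      have sqz: "(\<Sum>u\<in>idx n l. (z t l u)\<^sup>2) = (\<Sum>u\<in>idx n l. (x l u)\<^sup>2 * e l t u)" for t l
        unfolding z_def power2_eq_square by (intro sum.cong refl) (metis e01 mult.assoc mult.commute)
      have a1: "a t l \<le> 1" if l: "l \<in> J" for t l
      proof -
        have "(\<Sum>u\<in>idx n l. (x l u)\<^sup>2 * e l t u) \<le> (\<Sum>u\<in>idx n l. (x l u)\<^sup>2)"
          by (intro sum_mono) (simp add: e0 mult_left_le)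
        moreover have "(\<Sum>u\<in>idx n l. (x l u)\<^sup>2) \<le> 1" using x l by blast
        ultimately show ?thesis unfolding a_def sqz by simp
      qed
      have asq: "(\<Sum>t<n. (a t l)\<^sup>2) \<le> 1" if l: "l \<in> J" "K \<inter> l \<noteq> {}" for l
      proof -
        obtain k1 where k1: "k1 \<in> K" "k1 \<in> l" using l by blast
        have "(\<Sum>t<n. (a t l)\<^sup>2) = (\<Sum>t<n. \<Sum>u\<in>idx n l. (x l u)\<^sup>2 * e l t u)"
          unfolding a_def sqz by (intro sum.cong refl) (simp add: sum_nonneg e0)
        also have "\<dots> = (\<Sum>u\<in>idx n l. (x l u)\<^sup>2 * (\<Sum>t<n. e l t u))"
          by (subst sum.swap) (simp add: sum_distrib_left)
        also have "\<dots> \<le> (\<Sum>u\<in>idx n l. (x l u)\<^sup>2 * 1)"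
        proof (rule sum_mono, rule mult_left_mono)
          fix u
          have "(\<Sum>t<n. e l t u) \<le> (\<Sum>t<n. if t = u k1 then 1 else 0)"
            by (intro sum_mono) (auto simp: e_def k1)
          also have "\<dots> \<le> 1" by (simp add: sum.delta)
          finally show "(\<Sum>t<n. e l t u) \<le> 1" .
        qed simp
        also have "\<dots> \<le> 1" using x l by simp
        finally show ?thesis .
      qed
      have "(\<Sum>t<n. \<Prod>l\<in>J. a t l) \<le> (\<Sum>t<n. ((a t l1)\<^sup>2 + (a t l2)\<^sup>2) / 2)"
      proof (rule sum_mono)
        fix t
        have "(\<Prod>l\<in>J. a t l) = a t l1 * (a t l2 * (\<Prod>l\<in>J - {l1} - {l2}. a t l))"
          using l12 finJ by (simp add: prod.remove[of J l1] prod.remove[of "J - {l1}" l2])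
        also have "\<dots> \<le> a t l1 * (a t l2 * 1)"
          by (intro mult_left_mono prod_le_1) (auto simp: a0 a1)
        also have "\<dots> \<le> ((a t l1)\<^sup>2 + (a t l2)\<^sup>2) / 2"
          using sum_squares_bound[of "a t l1" "a t l2"] by simp
        finally show "(\<Prod>l\<in>J. a t l) \<le> ((a t l1)\<^sup>2 + (a t l2)\<^sup>2) / 2" .
      qed
      also have "\<dots> = ((\<Sum>t<n. (a t l1)\<^sup>2) + (\<Sum>t<n. (a t l2)\<^sup>2)) / 2"
        by (simp add: sum_divide_distrib[symmetric] sum.distrib)
      also have "\<dots> \<le> 1" using asq[of l1] asq[of l2] l12 by simp
      finally show "(\<Sum>t<n. \<Prod>l\<in>J. a t l) \<le> 1" .
    qed
    finally show "v \<le> Sup (elems n S J B)" using pnorm_Sup[OF Jne] by simp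
  qed
qed



lemma cat_idx:
  assumes "iI \<in> idx n I" "I \<subseteq> {..<d}" "j \<in> idx n ({..<d} - I)"
  shows "(\<lambda>k. if k \<in> I then iI k else j k) \<in> idx n {..<d}"
  using assms by (auto simp: idx_def PiE_iff extensional_def)

lemma slice_mask: "slice (mask A C) I iI = (\<lambda>j. slice A I iI j * indicator C (\<lambda>k. if k \<in> I then iI k else j k))"
  by (simp add: slice_def mask_def fun_eq_iff)

lemma adm_factor:
  assumes I: "I \<subseteq> {..<d}" and iI: "iI \<in> idx n I" and C: "C \<subseteq> idx n {..<d}"
    and fac: "\<And>J. partition_on ({..<d} - I) J \<Longrightarrow> \<exists>(c::real) w. \<bar>c\<bar> \<le> 1 \<and> (\<forall>l\<in>J. \<forall>u\<in>idx n l. \<bar>w l u\<bar> \<le> 1) \<and>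
        (\<forall>j\<in>idx n ({..<d} - I). indicator C (\<lambda>k. if k \<in> I then iI k else j k) = c * (\<Prod>l\<in>J. w l (restrict j l)))"
  shows "admissible n d I iI C"
  unfolding admissible_def
proof (intro conjI C allI impI)
  fix A :: "(nat \<Rightarrow> nat) \<Rightarrow> real" and J assume P: "partition_on ({..<d} - I) J"
  from fac[OF P] obtain c :: real and w where cw: "\<bar>c\<bar> \<le> 1" "\<forall>l\<in>J. \<forall>u\<in>idx n l. \<bar>w l u\<bar> \<le> 1"
    "\<forall>j\<in>idx n ({..<d} - I). indicator C (\<lambda>k. if k \<in> I then iI k else j k) = c * (\<Prod>l\<in>J. w l (restrict j l))"
    by blast
  show "pnorm n ({..<d} - I) J (slice (mask A C) I iI) \<le> pnorm n ({..<d} - I) J (slice A I iI)"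
    unfolding slice_mask by (rule factor_le[OF _ P cw(3) cw(1) cw(2)]) simp
qed

lemma adm_row:
  assumes I: "I \<subseteq> {..<d}" and iI: "iI \<in> idx n I" and k: "\<forall>m<L. k m < d"
  shows "admissible n d I iI {i \<in> idx n {..<d}. \<forall>m<L. i (k m) = jv m}"
proof (rule adm_factor[OF I iI])
  fix J assume P: "partition_on ({..<d} - I) J"
  have finJ: "finite J" using P finite_elements by blast
  have UJ: "\<Union>J = {..<d} - I" using P by (auto simp: partition_on_def)
  define c where "c = (of_bool (\<forall>m<L. k m \<in> I \<longrightarrow> iI (k m) = jv m) :: real)"
  define w where "w l u = (of_bool (\<forall>m<L. k m \<in> l \<longrightarrow> u (k m) = jv m) :: real)" for l and u :: "nat \<Rightarrow> nat"
  have "\<forall>j\<in>idx n ({..<d} - I). indicator {i \<in> idx n {..<d}. \<forall>m<L. i (k m) = jv m} (\<lambda>k. if k \<in> I then iI k else j k)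
      = c * (\<Prod>l\<in>J. w l (restrict j l))"
  proof
    fix j assume j: "j \<in> idx n ({..<d} - I)"
    have ci: "(\<lambda>k. if k \<in> I then iI k else j k) \<in> idx n {..<d}" by (rule cat_idx[OF iI I j])
    have "(\<Prod>l\<in>J. w l (restrict j l)) = of_bool (\<forall>l\<in>J. \<forall>m<L. k m \<in> l \<longrightarrow> restrict j l (k m) = jv m)"
      unfolding w_def by (rule prod_of_bool[OF finJ])
    moreover have "(\<forall>m<L. (if k m \<in> I then iI (k m) else j (k m)) = jv m) \<longleftrightarrow>
       (\<forall>m<L. k m \<in> I \<longrightarrow> iI (k m) = jv m) \<and> (\<forall>l\<in>J. \<forall>m<L. k m \<in> l \<longrightarrow> restrict j l (k m) = jv m)"
      using k UJ by (auto; metis DiffI Diff_iff UnionE lessThan_iff)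
    ultimately show "indicator {i \<in> idx n {..<d}. \<forall>m<L. i (k m) = jv m} (\<lambda>k. if k \<in> I then iI k else j k)
      = c * (\<Prod>l\<in>J. w l (restrict j l))"
      using ci unfolding c_def indicator_def by auto
  qed
  moreover have "\<bar>c\<bar> \<le> 1" "\<forall>l\<in>J. \<forall>u\<in>idx n l. \<bar>w l u\<bar> \<le> 1" unfolding c_def w_def by auto
  ultimately show "\<exists>(c::real) w. \<bar>c\<bar> \<le> 1 \<and> (\<forall>l\<in>J. \<forall>u\<in>idx n l. \<bar>w l u\<bar> \<le> 1) \<and>
        (\<forall>j\<in>idx n ({..<d} - I). indicator {i \<in> idx n {..<d}. \<forall>m<L. i (k m) = jv m} (\<lambda>k. if k \<in> I then iI k else j k) = c * (\<Prod>l\<in>J. w l (restrict j l)))"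
    by blast
qed auto

lemma adm_Int:
  assumes "admissible n d I iI C1" "admissible n d I iI C2"
  shows "admissible n d I iI (C1 \<inter> C2)"
  unfolding admissible_def
proof (intro conjI allI impI)
  show "C1 \<inter> C2 \<subseteq> idx n {..<d}" using assms unfolding admissible_def by blast
  fix A :: "(nat \<Rightarrow> nat) \<Rightarrow> real" and J assume P: "partition_on ({..<d} - I) J"
  have "mask A (C1 \<inter> C2) = mask (mask A C1) C2"
    by (simp add: mask_def fun_eq_iff indicator_inter_arith)
  then have "pnorm n ({..<d} - I) J (slice (mask A (C1 \<inter> C2)) I iI) \<le> pnorm n ({..<d} - I) J (slice (mask A C1) I iI)"
    using assms(2) P unfolding admissible_def by simp
  also have "\<dots> \<le> pnorm n ({..<d} - I) J (slice A I iI)"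
    using assms(1) P unfolding admissible_def by simp
  finally show "pnorm n ({..<d} - I) J (slice (mask A (C1 \<inter> C2)) I iI) \<le> pnorm n ({..<d} - I) J (slice A I iI)" .
qed

lemma all_eq_iff: "k0 \<in> K \<Longrightarrow> f k0 = t \<Longrightarrow> (\<forall>k\<in>K. \<forall>l\<in>K. f k = f l) \<longleftrightarrow> (\<forall>k\<in>K. f k = t)"
  by metis

lemma adm_diag:
  assumes I: "I \<subseteq> {..<d}" and iI: "iI \<in> idx n I" and K: "K \<subseteq> {..<d}"
  shows "admissible n d I iI {i \<in> idx n {..<d}. \<forall>k\<in>K. \<forall>l\<in>K. i k = i l}"
  unfolding admissible_def
proof (intro conjI allI impI)
  show "{i \<in> idx n {..<d}. \<forall>k\<in>K. \<forall>l\<in>K. i k = i l} \<subseteq> idx n {..<d}" by blast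
  fix A :: "(nat \<Rightarrow> nat) \<Rightarrow> real" and J assume P: "partition_on ({..<d} - I) J"
  define S where "S = {..<d} - I"
  define C where "C = {i \<in> idx n {..<d}. \<forall>k\<in>K. \<forall>l\<in>K. i k = i l}"
  have SP: "partition_on S J" using P S_def by simp
  have fS: "finite S" unfolding S_def by simp
  have finJ: "finite J" using P finite_elements by blast
  have UJ: "\<Union>J = S" using P by (auto simp: partition_on_def S_def)
  have ind: "indicator C (\<lambda>k. if k \<in> I then iI k else j k) = (of_bool (\<forall>k\<in>K. \<forall>l\<in>K.
      (if k \<in> I then iI k else j k) = (if l \<in> I then iI l else j l)) :: real)" if j: "j \<in> idx n S" for j
  proof -
    have "(\<lambda>k. if k \<in> I then iI k else j k) \<in> idx n {..<d}" using cat_idx[OF iI I, of j] j unfolding S_def by blast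
    then show ?thesis unfolding C_def indicator_def by (simp only: mem_Collect_eq simp_thms)
  qed
  have goal: "pnorm n S J (slice (mask A C) I iI) \<le> pnorm n S J (slice A I iI)"
  proof (cases "K \<inter> I = {}")
    case False
    then obtain k0 where k0: "k0 \<in> K" "k0 \<in> I" by blast
    define t0 where "t0 = iI k0"
    define c where "c = (of_bool (\<forall>k\<in>K \<inter> I. iI k = t0) :: real)"
    define w where "w l u = (of_bool (\<forall>k\<in>K \<inter> l. u k = t0) :: real)" for l and u :: "nat \<Rightarrow> nat"
    have "\<forall>j\<in>idx n S. indicator C (\<lambda>k. if k \<in> I then iI k else j k) = c * (\<Prod>l\<in>J. w l (restrict j l))"
    proof
      fix j assume j: "j \<in> idx n S"
      have "(\<Prod>l\<in>J. w l (restrict j l)) = of_bool (\<forall>l\<in>J. \<forall>k\<in>K \<inter> l. restrict j l k = t0)"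
        unfolding w_def by (rule prod_of_bool[OF finJ])
      moreover have "(\<forall>k\<in>K. \<forall>l\<in>K. (if k \<in> I then iI k else j k) = (if l \<in> I then iI l else j l))
         \<longleftrightarrow> (\<forall>k\<in>K. (if k \<in> I then iI k else j k) = t0)"
        using all_eq_iff[of k0 K "\<lambda>k. if k \<in> I then iI k else j k" t0] k0 unfolding t0_def by simp
      moreover have "(\<forall>k\<in>K. (if k \<in> I then iI k else j k) = t0) \<longleftrightarrow>
          (\<forall>k\<in>K \<inter> I. iI k = t0) \<and> (\<forall>l\<in>J. \<forall>k\<in>K \<inter> l. restrict j l k = t0)"
      proof -
        have inJ: "\<exists>l\<in>J. k \<in> l" if "k \<in> K" "k \<notin> I" for k using that K UJ unfolding S_def by blast
        show ?thesis
        proof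
          assume a: "\<forall>k\<in>K. (if k \<in> I then iI k else j k) = t0"
          show "(\<forall>k\<in>K \<inter> I. iI k = t0) \<and> (\<forall>l\<in>J. \<forall>k\<in>K \<inter> l. restrict j l k = t0)"
          proof
            show "\<forall>k\<in>K \<inter> I. iI k = t0" using a by auto
            show "\<forall>l\<in>J. \<forall>k\<in>K \<inter> l. restrict j l k = t0"
            proof (intro ballI)
              fix l k assume l: "l \<in> J" and k: "k \<in> K \<inter> l"
              have "k \<notin> I" using l k UJ unfolding S_def by blast
              then show "restrict j l k = t0" using a k by auto
            qed
          qed
        next
          assume a: "(\<forall>k\<in>K \<inter> I. iI k = t0) \<and> (\<forall>l\<in>J. \<forall>k\<in>K \<inter> l. restrict j l k = t0)"
          show "\<forall>k\<in>K. (if k \<in> I then iI k else j k) = t0"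
          proof
            fix k assume k: "k \<in> K"
            show "(if k \<in> I then iI k else j k) = t0"
            proof (cases "k \<in> I")
              case False
              then obtain l where "l \<in> J" "k \<in> l" using inJ k by blast
              then show ?thesis using a k False by auto
            qed (use a k in auto)
          qed
        qed
      qed
      ultimately show "indicator C (\<lambda>k. if k \<in> I then iI k else j k) = c * (\<Prod>l\<in>J. w l (restrict j l))"
        using ind[OF j] unfolding c_def by simp
    qed
    moreover have "\<bar>c\<bar> \<le> 1" "\<forall>l\<in>J. \<forall>u\<in>idx n l. \<bar>w l u\<bar> \<le> 1" unfolding c_def w_def by auto
    ultimately show ?thesis unfolding slice_mask by (rule factor_le[OF fS SP])
  next
    case True
    then have KS: "K \<subseteq> S" using K unfolding S_def by auto
    have ind2: "indicator C (\<lambda>k. if k \<in> I then iI k else j k) = (of_bool (\<forall>k\<in>K. \<forall>l\<in>K. j k = j l) :: real)"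
      if j: "j \<in> idx n S" for j
    proof -
      have nI: "k \<notin> I" if "k \<in> K" for k using True that by blast
      have "(\<forall>k\<in>K. \<forall>l\<in>K. (if k \<in> I then iI k else j k) = (if l \<in> I then iI l else j l))
          \<longleftrightarrow> (\<forall>k\<in>K. \<forall>l\<in>K. j k = j l)" using nI by auto
      then show ?thesis using ind[OF j] by simp
    qed
    show ?thesis
    proof (cases "K = {} \<or> (\<exists>l1\<in>J. K \<subseteq> l1)")
      case True
      define w where "w l u = (of_bool (\<forall>k\<in>K \<inter> l. \<forall>k'\<in>K \<inter> l. u k = u k') :: real)" for l and u :: "nat \<Rightarrow> nat"
      have "\<forall>j\<in>idx n S. indicator C (\<lambda>k. if k \<in> I then iI k else j k) = 1 * (\<Prod>l\<in>J. w l (restrict j l))"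
      proof
        fix j assume j: "j \<in> idx n S"
        have "(\<Prod>l\<in>J. w l (restrict j l)) = of_bool (\<forall>l\<in>J. \<forall>k\<in>K \<inter> l. \<forall>k'\<in>K \<inter> l. restrict j l k = restrict j l k')"
          unfolding w_def by (rule prod_of_bool[OF finJ])
        moreover have "(\<forall>l\<in>J. \<forall>k\<in>K \<inter> l. \<forall>k'\<in>K \<inter> l. restrict j l k = restrict j l k') \<longleftrightarrow> (\<forall>k\<in>K. \<forall>l\<in>K. j k = j l)"
        proof
          assume a: "\<forall>l\<in>J. \<forall>k\<in>K \<inter> l. \<forall>k'\<in>K \<inter> l. restrict j l k = restrict j l k'"
          show "\<forall>k\<in>K. \<forall>l\<in>K. j k = j l"
          proof (cases "K = {}")
            case False
            with \<open>K = {} \<or> (\<exists>l1\<in>J. K \<subseteq> l1)\<close> obtain l1 where "l1 \<in> J" "K \<subseteq> l1" by blast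
            show ?thesis
            proof (intro ballI)
              fix k k' assume kk: "k \<in> K" "k' \<in> K"
              then have "restrict j l1 k = restrict j l1 k'" using a \<open>l1 \<in> J\<close> \<open>K \<subseteq> l1\<close> by blast
              moreover have "k \<in> l1" "k' \<in> l1" using kk \<open>K \<subseteq> l1\<close> by auto
              ultimately show "j k = j k'" by simp
            qed
          qed simp
        qed auto
        ultimately show "indicator C (\<lambda>k. if k \<in> I then iI k else j k) = 1 * (\<Prod>l\<in>J. w l (restrict j l))"
          using ind2[OF j] by simp
      qed
      moreover have "\<bar>1::real\<bar> \<le> 1" "\<forall>l\<in>J. \<forall>u\<in>idx n l. \<bar>w l u\<bar> \<le> 1" unfolding w_def by auto
      ultimately show ?thesis unfolding slice_mask by (rule factor_le[OF fS SP])
    next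
      case False
      then obtain k1 where k1: "k1 \<in> K" by blast
      then obtain l1 where l1: "l1 \<in> J" "k1 \<in> l1" using KS UJ by blast
      from False l1 obtain k2 where k2: "k2 \<in> K" "k2 \<notin> l1" by blast
      then obtain l2 where l2: "l2 \<in> J" "k2 \<in> l2" using KS UJ by blast
      have "l1 \<noteq> l2" using l1 l2 k2 by blast
      have "pnorm n S J (slice (mask A C) I iI) = pnorm n S J (\<lambda>j. slice A I iI j * of_bool (\<forall>k\<in>K. \<forall>k'\<in>K. j k = j k'))"
        unfolding slice_mask using ind2 by (intro pnorm_cong) simp
      also have "\<dots> \<le> pnorm n S J (slice A I iI)"
        by (rule diag_cross[OF fS SP KS l1(1) l2(1) \<open>l1 \<noteq> l2\<close>]) (use k1 l1 k2 l2 in auto)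
      finally show ?thesis .
    qed
  qed
  then show "pnorm n ({..<d} - I) J (slice (mask A {i \<in> idx n {..<d}. \<forall>k\<in>K. \<forall>l\<in>K. i k = i l}) I iI)
      \<le> pnorm n ({..<d} - I) J (slice A I iI)" unfolding S_def C_def .
qed



lemma incl_excl:
  assumes P: "partition_on ({..<d} - I) J" and fF: "finite F"
    and G: "\<forall>e\<in>F. admissible n d I iI (G e)"
  shows "\<forall>C. admissible n d I iI C \<longrightarrow>
    pnorm n ({..<d} - I) J (slice (\<lambda>i. A i * (indicator C i * (\<Prod>e\<in>F. 1 - indicator (G e) i))) I iI)
      \<le> 2 ^ card F * pnorm n ({..<d} - I) J (slice A I iI)"
  using fF G
proof (induction F rule: finite_induct)
  case empty
  show ?case
  proof (intro allI impI)
    fix C assume "admissible n d I iI C"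
    moreover have "(\<lambda>i. A i * (indicator C i * (\<Prod>e\<in>{}. 1 - indicator (G e) i))) = mask A C"
      by (simp add: mask_def fun_eq_iff)
    ultimately have "pnorm n ({..<d} - I) J (slice (mask A C) I iI) \<le> pnorm n ({..<d} - I) J (slice A I iI)"
      using P unfolding admissible_def by blast
    then show "pnorm n ({..<d} - I) J (slice (\<lambda>i. A i * (indicator C i * (\<Prod>e\<in>{}. 1 - indicator (G e) i))) I iI)
      \<le> 2 ^ card {} * pnorm n ({..<d} - I) J (slice A I iI)"
      using \<open>(\<lambda>i. A i * (indicator C i * (\<Prod>e\<in>{}. 1 - indicator (G e) i))) = mask A C\<close> by simp
  qed
next
  case (insert e F)
  show ?case
  proof (intro allI impI)
    fix C assume C: "admissible n d I iI C"
    have Ge: "admissible n d I iI (G e)" using insert.prems by simp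
    have IH: "\<forall>C. admissible n d I iI C \<longrightarrow>
      pnorm n ({..<d} - I) J (slice (\<lambda>i. A i * (indicator C i * (\<Prod>e\<in>F. 1 - indicator (G e) i))) I iI)
      \<le> 2 ^ card F * pnorm n ({..<d} - I) J (slice A I iI)" using insert.IH insert.prems by simp
    have eq: "slice (\<lambda>i. A i * (indicator C i * (\<Prod>e\<in>insert e F. 1 - indicator (G e) i))) I iI
      = (\<lambda>j. slice (\<lambda>i. A i * (indicator C i * (\<Prod>e\<in>F. 1 - indicator (G e) i))) I iI j
           - slice (\<lambda>i. A i * (indicator (C \<inter> G e) i * (\<Prod>e\<in>F. 1 - indicator (G e) i))) I iI j)"
    proof -
      have "A x * (indicator C x * (\<Prod>e\<in>insert e F. 1 - indicator (G e) x))
         = A x * (indicator C x * (\<Prod>e\<in>F. 1 - indicator (G e) x)) - A x * (indicator (C \<inter> G e) x * (\<Prod>e\<in>F. 1 - indicator (G e) x))"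
        for x :: "nat \<Rightarrow> nat"
      proof -
        have p: "(\<Prod>e\<in>insert e F. 1 - indicator (G e) x) = (1 - indicator (G e) x) * (\<Prod>e\<in>F. 1 - indicator (G e) x :: real)"
          using insert.hyps by simp
        have ii: "indicator (C \<inter> G e) x = (indicator C x * indicator (G e) x :: real)"
          by (rule indicator_inter_arith)
        show ?thesis unfolding p ii by (simp add: algebra_simps)
      qed
      then show ?thesis unfolding slice_def by (rule ext)
    qed
    have "pnorm n ({..<d} - I) J (slice (\<lambda>i. A i * (indicator C i * (\<Prod>e\<in>insert e F. 1 - indicator (G e) i))) I iI)
      \<le> pnorm n ({..<d} - I) J (slice (\<lambda>i. A i * (indicator C i * (\<Prod>e\<in>F. 1 - indicator (G e) i))) I iI)
        + pnorm n ({..<d} - I) J (slice (\<lambda>i. A i * (indicator (C \<inter> G e) i * (\<Prod>e\<in>F. 1 - indicator (G e) i))) I iI)"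
      unfolding eq by (rule pnorm_triangle[OF _ P]) simp
    also have "\<dots> \<le> 2 ^ card F * pnorm n ({..<d} - I) J (slice A I iI) + 2 ^ card F * pnorm n ({..<d} - I) J (slice A I iI)"
      by (rule add_mono[OF IH[rule_format, OF C] IH[rule_format, OF adm_Int[OF C Ge]]])
    also have "\<dots> = 2 ^ card (insert e F) * pnorm n ({..<d} - I) J (slice A I iI)"
      using insert.hyps by simp
    finally show "pnorm n ({..<d} - I) J (slice (\<lambda>i. A i * (indicator C i * (\<Prod>e\<in>insert e F. 1 - indicator (G e) i))) I iI)
      \<le> 2 ^ card (insert e F) * pnorm n ({..<d} - I) J (slice A I iI)" .
  qed
qed

lemma adm_blocks:
  assumes I: "I \<subseteq> {..<d}" and iI: "iI \<in> idx n I" and fF: "finite F" and F: "\<forall>B\<in>F. B \<subseteq> {..<d}"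
  shows "admissible n d I iI {i \<in> idx n {..<d}. \<forall>B\<in>F. \<forall>k\<in>B. \<forall>l\<in>B. i k = i l}"
  using fF F
proof (induction F rule: finite_induct)
  case empty
  have "{i \<in> idx n {..<d}. \<forall>B\<in>{}. \<forall>k\<in>B. \<forall>l\<in>B. i k = i l} = {i \<in> idx n {..<d}. \<forall>k\<in>{}. \<forall>l\<in>{}. i k = i l}"
    by simp
  then show ?case using adm_diag[OF I iI, of "{}"] by simp
next
  case (insert B F)
  have "{i \<in> idx n {..<d}. \<forall>B\<in>insert B F. \<forall>k\<in>B. \<forall>l\<in>B. i k = i l}
    = {i \<in> idx n {..<d}. \<forall>k\<in>B. \<forall>l\<in>B. i k = i l} \<inter> {i \<in> idx n {..<d}. \<forall>B\<in>F. \<forall>k\<in>B. \<forall>l\<in>B. i k = i l}"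
    by blast
  then show ?case using adm_Int[OF adm_diag[OF I iI, of B]] insert by simp
qed

lemma Lset_char:
  assumes K: "partition_on {..<d} K" and i: "i \<in> idx n {..<d}"
  shows "i \<in> Lset n d K \<longleftrightarrow> (\<forall>B\<in>K. \<forall>k\<in>B. \<forall>l\<in>B. i k = i l) \<and>
     (\<forall>e. e \<subseteq> K \<and> card e = 2 \<longrightarrow> \<not> (\<forall>k\<in>\<Union>e. \<forall>l\<in>\<Union>e. i k = i l))"
proof -
  have UK: "\<Union>K = {..<d}" and dK: "disjoint K" and neK: "{} \<notin> K"
    using K by (auto simp: partition_on_def)
  have same: "B1 = B2" if "B1 \<in> K" "B2 \<in> K" "k \<in> B1" "k \<in> B2" for B1 B2 k
    using dK that disjointD by blast
  show ?thesis
  proof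
    assume L: "i \<in> Lset n d K"
    then have L': "\<forall>k<d. \<forall>l<d. (i k = i l \<longleftrightarrow> (\<exists>B\<in>K. k \<in> B \<and> l \<in> B))" by (simp add: Lset_def)
    show "(\<forall>B\<in>K. \<forall>k\<in>B. \<forall>l\<in>B. i k = i l) \<and>
     (\<forall>e. e \<subseteq> K \<and> card e = 2 \<longrightarrow> \<not> (\<forall>k\<in>\<Union>e. \<forall>l\<in>\<Union>e. i k = i l))"
    proof (intro conjI allI impI ballI notI)
      fix B k l assume "B \<in> K" "k \<in> B" "l \<in> B"
      moreover then have "k < d" "l < d" using UK by auto
      ultimately show "i k = i l" using L' by blast
    next
      fix e assume e: "e \<subseteq> K \<and> card e = 2" and all: "\<forall>k\<in>\<Union>e. \<forall>l\<in>\<Union>e. i k = i l"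
      then obtain B1 B2 where B: "e = {B1, B2}" "B1 \<noteq> B2" by (auto simp: card_2_iff)
      have B12: "B1 \<in> K" "B2 \<in> K" using e B by auto
      then obtain k l where kl: "k \<in> B1" "l \<in> B2" using neK by (metis all_not_in_conv)
      then have "k < d" "l < d" using UK B12 by auto
      moreover have "k \<in> \<Union>e" "l \<in> \<Union>e" using kl B by auto
      moreover have "i k = i l" using all calculation(3,4) by blast
      ultimately obtain B where "B \<in> K" "k \<in> B" "l \<in> B" using L' by blast
      then show False using same[of B B1 k] same[of B B2 l] B12 kl B(2) by simp
    qed
  next
    assume H: "(\<forall>B\<in>K. \<forall>k\<in>B. \<forall>l\<in>B. i k = i l) \<and>
     (\<forall>e. e \<subseteq> K \<and> card e = 2 \<longrightarrow> \<not> (\<forall>k\<in>\<Union>e. \<forall>l\<in>\<Union>e. i k = i l))"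
    then have H1: "\<forall>B\<in>K. \<forall>k\<in>B. \<forall>l\<in>B. i k = i l"
      and H2: "\<forall>e. e \<subseteq> K \<and> card e = 2 \<longrightarrow> \<not> (\<forall>k\<in>\<Union>e. \<forall>l\<in>\<Union>e. i k = i l)" by blast+
    have "\<forall>k<d. \<forall>l<d. (i k = i l \<longleftrightarrow> (\<exists>B\<in>K. k \<in> B \<and> l \<in> B))"
    proof (intro allI impI iffI)
      fix k l assume "k < d" "l < d" "\<exists>B\<in>K. k \<in> B \<and> l \<in> B"
      then show "i k = i l" using H1 by blast
    next
      fix k l assume kl: "k < d" "l < d" and eq: "i k = i l"
      have "k \<in> \<Union>K" "l \<in> \<Union>K" using kl UK by auto
      then obtain B1 B2 where B1: "B1 \<in> K" "k \<in> B1" and B2: "B2 \<in> K" "l \<in> B2" by blast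
      show "\<exists>B\<in>K. k \<in> B \<and> l \<in> B"
      proof (cases "B1 = B2")
        case True then show ?thesis using B1 B2 by blast
      next
        case False
        have "{B1, B2} \<subseteq> K \<and> card {B1, B2} = 2" using False B1(1) B2(1) by simp
        moreover have "\<forall>a\<in>\<Union>{B1, B2}. \<forall>b\<in>\<Union>{B1, B2}. i a = i b"
        proof (intro ballI)
          fix a b assume a: "a \<in> \<Union>{B1, B2}" and b: "b \<in> \<Union>{B1, B2}"
          have ik: "i c = i k" if c: "c \<in> \<Union>{B1, B2}" for c
          proof (cases "c \<in> B1")
            case True then show ?thesis using H1 B1 by blast
          next
            case False then have "c \<in> B2" using c by blast
            then have "i c = i l" using H1 B2 by blast
            then show ?thesis using eq by simp
          qed
          show "i a = i b" using ik[OF a] ik[OF b] by simp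
        qed
        ultimately have False using H2[rule_format, of "{B1, B2}"] by blast
        then show ?thesis ..
      qed
    qed
    then show "i \<in> Lset n d K" using i by (simp add: Lset_def)
  qed
qed



lemma part4:
  assumes I: "I \<subseteq> {..<d}" and iI: "iI \<in> idx n I" and K: "partition_on {..<d} K"
    and P: "partition_on ({..<d} - I) J"
  shows "pnorm n ({..<d} - I) J (slice (mask A (Lset n d K)) I iI)
         \<le> 2 ^ (card K * (card K - 1) div 2) * pnorm n ({..<d} - I) J (slice A I iI)"
proof -
  have finK: "finite K" using K finite_elements by blast
  have UK: "\<Union>K = {..<d}" using K by (auto simp: partition_on_def)
  define Pairs where "Pairs = {e. e \<subseteq> K \<and> card e = 2}"
  define G where "G e = {i \<in> idx n {..<d}. \<forall>k\<in>\<Union>e. \<forall>l\<in>\<Union>e. i k = i l}" for e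
  define C0 where "C0 = {i \<in> idx n {..<d}. \<forall>B\<in>K. \<forall>k\<in>B. \<forall>l\<in>B. i k = i l}"
  have "Pairs \<subseteq> Pow K" unfolding Pairs_def by auto
  then have finP: "finite Pairs" by (rule finite_subset) (simp add: finK)
  have cardP: "card Pairs = card K * (card K - 1) div 2"
    unfolding Pairs_def n_subsets[OF finK] choose_two ..
  have admG: "\<forall>e\<in>Pairs. admissible n d I iI (G e)"
  proof
    fix e assume "e \<in> Pairs"
    then have "\<Union>e \<subseteq> {..<d}" using UK unfolding Pairs_def by blast
    then show "admissible n d I iI (G e)" unfolding G_def by (rule adm_diag[OF I iI])
  qed
  have admC0: "admissible n d I iI C0" unfolding C0_def
    by (rule adm_blocks[OF I iI finK]) (use UK in blast)
  have ie: "pnorm n ({..<d} - I) J (slice (\<lambda>i. A i * (indicator C0 i * (\<Prod>e\<in>Pairs. 1 - indicator (G e) i))) I iI)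
      \<le> 2 ^ card Pairs * pnorm n ({..<d} - I) J (slice A I iI)"
    by (rule incl_excl[OF P finP admG, rule_format, OF admC0])
  have pw: "indicator (Lset n d K) i = (indicator C0 i * (\<Prod>e\<in>Pairs. 1 - indicator (G e) i) :: real)"
    if i: "i \<in> idx n {..<d}" for i
  proof -
    have ge: "indicator (G e) i = (of_bool (\<forall>k\<in>\<Union>e. \<forall>l\<in>\<Union>e. i k = i l) :: real)" for e
      using i unfolding G_def indicator_def by (simp only: mem_Collect_eq simp_thms)
    have ob: "1 - (of_bool Q :: real) = of_bool (\<not> Q)" for Q by simp
    have "(\<Prod>e\<in>Pairs. 1 - indicator (G e) i :: real) = (\<Prod>e\<in>Pairs. of_bool (\<not> (\<forall>k\<in>\<Union>e. \<forall>l\<in>\<Union>e. i k = i l)))"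
      by (intro prod.cong refl) (simp only: ge ob)
    also have "\<dots> = of_bool (\<forall>e\<in>Pairs. \<not> (\<forall>k\<in>\<Union>e. \<forall>l\<in>\<Union>e. i k = i l))"
      by (rule prod_of_bool[OF finP])
    finally have 1: "(\<Prod>e\<in>Pairs. 1 - indicator (G e) i :: real) = of_bool (\<forall>e\<in>Pairs. \<not> (\<forall>k\<in>\<Union>e. \<forall>l\<in>\<Union>e. i k = i l))" .
    have 2: "indicator C0 i = (of_bool (\<forall>B\<in>K. \<forall>k\<in>B. \<forall>l\<in>B. i k = i l) :: real)"
      using i unfolding C0_def indicator_def by (simp only: mem_Collect_eq simp_thms)
    have 3: "(\<forall>e\<in>Pairs. \<not> (\<forall>k\<in>\<Union>e. \<forall>l\<in>\<Union>e. i k = i l)) \<longleftrightarrow>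
       (\<forall>e. e \<subseteq> K \<and> card e = 2 \<longrightarrow> \<not> (\<forall>k\<in>\<Union>e. \<forall>l\<in>\<Union>e. i k = i l))"
      unfolding Pairs_def by (simp only: Ball_def mem_Collect_eq)
    show ?thesis unfolding 1 2 3 unfolding indicator_def Lset_char[OF K i] by (rule of_bool_conj)
  qed
  have "pnorm n ({..<d} - I) J (slice (mask A (Lset n d K)) I iI)
     = pnorm n ({..<d} - I) J (slice (\<lambda>i. A i * (indicator C0 i * (\<Prod>e\<in>Pairs. 1 - indicator (G e) i))) I iI)"
  proof (rule pnorm_cong)
    fix j assume "j \<in> idx n ({..<d} - I)"
    then have "(\<lambda>k. if k \<in> I then iI k else j k) \<in> idx n {..<d}" by (rule cat_idx[OF iI I])
    then show "slice (mask A (Lset n d K)) I iI j = slice (\<lambda>i. A i * (indicator C0 i * (\<Prod>e\<in>Pairs. 1 - indicator (G e) i))) I iI j"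
      unfolding slice_def mask_def using pw by simp
  qed
  also have "\<dots> \<le> 2 ^ (card K * (card K - 1) div 2) * pnorm n ({..<d} - I) J (slice A I iI)"
    using ie unfolding cardP .
  finally show ?thesis .
qed

lemma part5:
  assumes n: "0 < n" and I: "I \<subseteq> {..<d}" and iI: "iI \<in> idx n I"
    and P: "partition_on ({..<d} - I) J"
  shows "pnorm n ({..<d} - I) J (slice (\<lambda>i. A i * tprod d v i) I iI)
         \<le> pnorm n ({..<d} - I) J (slice A I iI) * (\<Prod>k<d. supnorm n (v k))"
proof -
  define S where "S = {..<d} - I"
  have SP: "partition_on S J" using P S_def by simp
  have fS: "finite S" unfolding S_def by simp
  have finJ: "finite J" using SP fS finite_elements by blast
  have UJ: "\<Union>J = S" using SP by (auto simp: partition_on_def)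
  have dJ: "\<forall>A\<in>J. \<forall>B\<in>J. A \<noteq> B \<longrightarrow> A \<inter> B = {}" using SP disjointD by (auto simp: partition_on_def)
  have fl: "\<forall>A\<in>J. finite A" using UJ fS by (metis Union_upper finite_subset)
  have finI: "finite I" using I finite_subset by blast
  have sn_ge: "\<bar>v k t\<bar> \<le> supnorm n (v k)" if "t < n" for k t
  proof -
    have "{\<bar>v k j\<bar> | j. j < n} = (\<lambda>j. \<bar>v k j\<bar>) ` {..<n}" by auto
    then have "finite {\<bar>v k j\<bar> | j. j < n}" by simp
    moreover have "\<bar>v k t\<bar> \<in> {\<bar>v k j\<bar> | j. j < n}" using that by blast
    ultimately show ?thesis unfolding supnorm_def by (rule Max_ge)
  qed
  have sn_nn: "0 \<le> supnorm n (v k)" for k using sn_ge[OF n, of k] by linarith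
  define c where "c = (\<Prod>k\<in>I. v k (iI k))"
  define w where "w l u = (\<Prod>k\<in>l. v k (u k))" for l and u :: "nat \<Rightarrow> nat"
  define M where "M l = (\<Prod>k\<in>l. supnorm n (v k))" for l
  have dec: "{..<d} = I \<union> S" "I \<inter> S = {}" using I unfolding S_def by auto
  have eqs: "slice (\<lambda>i. A i * tprod d v i) I iI j = slice A I iI j * (c * (\<Prod>l\<in>J. w l (restrict j l)))"
    if j: "j \<in> idx n S" for j
  proof -
    have "(\<Prod>k<d. v k (if k \<in> I then iI k else j k))
       = (\<Prod>k\<in>I. v k (if k \<in> I then iI k else j k)) * (\<Prod>k\<in>S. v k (if k \<in> I then iI k else j k))"
      unfolding dec(1) using finI fS dec(2) by (rule prod.union_disjoint)
    also have "(\<Prod>k\<in>I. v k (if k \<in> I then iI k else j k)) = c"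
      unfolding c_def by (intro prod.cong) auto
    also have "(\<Prod>k\<in>S. v k (if k \<in> I then iI k else j k)) = (\<Prod>k\<in>\<Union>J. v k (j k))"
      unfolding UJ S_def by (intro prod.cong) auto
    also have "\<dots> = (\<Prod>l\<in>J. \<Prod>k\<in>l. v k (j k))"
      using prod.Union_disjoint[OF fl dJ] by simp
    also have "\<dots> = (\<Prod>l\<in>J. w l (restrict j l))"
      unfolding w_def by (intro prod.cong refl) simp
    finally show ?thesis unfolding slice_def tprod_def by simp
  qed
  have wM: "\<forall>l\<in>J. \<forall>u\<in>idx n l. \<bar>w l u\<bar> \<le> M l"
  proof (intro ballI)
    fix l u assume l: "l \<in> J" and u: "u \<in> idx n l"
    show "\<bar>w l u\<bar> \<le> M l" unfolding w_def M_def abs_prod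
      using u by (intro prod_mono) (auto simp: idx_def PiE_iff intro: sn_ge)
  qed
  have Mnn: "\<forall>l\<in>J. 0 \<le> M l" unfolding M_def by (auto intro: prod_nonneg sn_nn)
  have "pnorm n S J (slice (\<lambda>i. A i * tprod d v i) I iI)
      = pnorm n S J (\<lambda>j. slice A I iI j * (c * (\<Prod>l\<in>J. w l (restrict j l))))"
    using eqs by (rule pnorm_cong)
  also have "\<dots> \<le> \<bar>c\<bar> * (\<Prod>l\<in>J. M l) * pnorm n S J (slice A I iI)"
    by (rule weight[OF fS SP wM Mnn])
  also have "\<dots> \<le> (\<Prod>k<d. supnorm n (v k)) * pnorm n S J (slice A I iI)"
  proof (rule mult_right_mono[OF _ pnorm_nonneg[OF fS SP]])
    have "\<bar>c\<bar> \<le> (\<Prod>k\<in>I. supnorm n (v k))" unfolding c_def abs_prod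
      using iI I by (intro prod_mono) (auto simp: idx_def PiE_iff intro: sn_ge)
    moreover have "(\<Prod>l\<in>J. M l) = (\<Prod>k\<in>S. supnorm n (v k))"
      unfolding M_def UJ[symmetric] using prod.Union_disjoint[OF fl dJ, of "\<lambda>k. supnorm n (v k)"] by (simp add: comp_def)
    moreover have "(\<Prod>k<d. supnorm n (v k)) = (\<Prod>k\<in>I. supnorm n (v k)) * (\<Prod>k\<in>S. supnorm n (v k))"
      unfolding dec(1) using finI fS dec(2) by (rule prod.union_disjoint)
    moreover have "0 \<le> (\<Prod>k\<in>S. supnorm n (v k))" by (intro prod_nonneg) (simp add: sn_nn)
    ultimately show "\<bar>c\<bar> * (\<Prod>l\<in>J. M l) \<le> (\<Prod>k<d. supnorm n (v k))"
      by (simp add: mult_right_mono)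
  qed
  finally show ?thesis unfolding S_def by (simp add: mult.commute)
qed


theorem lemma6p5:
  fixes n d :: nat and A :: "(nat \<Rightarrow> nat) \<Rightarrow> real" and I :: "nat set" and iI :: "nat \<Rightarrow> nat"
  assumes "0 < n" and "I \<subseteq> {..<d}" and "iI \<in> idx n I"
  shows
   "(\<forall>(l::nat) (k::nat \<Rightarrow> nat) (j::nat \<Rightarrow> nat).
       (\<forall>m m'. m < m' \<and> m' < l \<longrightarrow> k m < k m') \<and> (\<forall>m<l. k m < d \<and> j m < n) \<longrightarrow>
       admissible n d I iI {i \<in> idx n {..<d}. \<forall>m<l. i (k m) = j m})
  \<and> (\<forall>K. K \<subseteq> {..<d} \<longrightarrow>
       admissible n d I iI {i \<in> idx n {..<d}. \<forall>k\<in>K. \<forall>l\<in>K. i k = i l})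
  \<and> (\<forall>C1 C2. admissible n d I iI C1 \<and> admissible n d I iI C2 \<longrightarrow> admissible n d I iI (C1 \<inter> C2))
  \<and> (\<forall>\<K> \<J>. partition_on {..<d} \<K> \<and> partition_on ({..<d} - I) \<J> \<longrightarrow>
       pnorm n ({..<d} - I) \<J> (slice (mask A (Lset n d \<K>)) I iI)
         \<le> 2 ^ (card \<K> * (card \<K> - 1) div 2) * pnorm n ({..<d} - I) \<J> (slice A I iI))
  \<and> (\<forall>v \<J>. partition_on ({..<d} - I) \<J> \<longrightarrow>
       pnorm n ({..<d} - I) \<J> (slice (\<lambda>i. A i * tprod d v i) I iI)
         \<le> pnorm n ({..<d} - I) \<J> (slice A I iI) * (\<Prod>k<d. supnorm n (v k)))"
  proof -
  have I: "I \<subseteq> {..<d}" and iI: "iI \<in> idx n I" using assms by auto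
  have 1: "\<forall>(l::nat) (k::nat \<Rightarrow> nat) (j::nat \<Rightarrow> nat).
       (\<forall>m m'. m < m' \<and> m' < l \<longrightarrow> k m < k m') \<and> (\<forall>m<l. k m < d \<and> j m < n) \<longrightarrow>
       admissible n d I iI {i \<in> idx n {..<d}. \<forall>m<l. i (k m) = j m}"
  proof (intro allI impI)
    fix l :: nat and k j :: "nat \<Rightarrow> nat"
    assume "(\<forall>m m'. m < m' \<and> m' < l \<longrightarrow> k m < k m') \<and> (\<forall>m<l. k m < d \<and> j m < n)"
    then have "\<forall>m<l. k m < d" by blast
    then show "admissible n d I iI {i \<in> idx n {..<d}. \<forall>m<l. i (k m) = j m}"
      by (rule adm_row[OF I iI])
  qed
  have 2: "\<forall>K. K \<subseteq> {..<d} \<longrightarrow>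
       admissible n d I iI {i \<in> idx n {..<d}. \<forall>k\<in>K. \<forall>l\<in>K. i k = i l}"
    using adm_diag[OF I iI] by blast
  have 3: "\<forall>C1 C2. admissible n d I iI C1 \<and> admissible n d I iI C2 \<longrightarrow> admissible n d I iI (C1 \<inter> C2)"
    using adm_Int by blast
  have 4: "\<forall>\<K> \<J>. partition_on {..<d} \<K> \<and> partition_on ({..<d} - I) \<J> \<longrightarrow>
       pnorm n ({..<d} - I) \<J> (slice (mask A (Lset n d \<K>)) I iI)
         \<le> 2 ^ (card \<K> * (card \<K> - 1) div 2) * pnorm n ({..<d} - I) \<J> (slice A I iI)"
    using part4[OF I iI] by blast
  have 5: "\<forall>v \<J>. partition_on ({..<d} - I) \<J> \<longrightarrow>
       pnorm n ({..<d} - I) \<J> (slice (\<lambda>i. A i * tprod d v i) I iI)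
         \<le> pnorm n ({..<d} - I) \<J> (slice A I iI) * (\<Prod>k<d. supnorm n (v k))"
    using part5[OF assms(1) I iI] by blast
  show ?thesis using 1 2 3 4 5 by (intro conjI)
qed

end
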